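(* Let $M$ be a matroid of rank $3$ on $[n]$. If $M$ has no parallel elements, then $M$ is DJS. In particular, every simple matroid of rank $3$ is DJS.
   Context: A rank-$3$ matroid $M$ on $[n]$ is called DJS if, letting $E$ be the set of non-loop elements of $M$, every linear ordering $w_1w_2\cdots w_m$ of $E$ has three consecutive elements $\{w_j,w_{j+1},w_{j+2}\}$ forming a basis of $M$. (Equivalently, the diagonal arrangement $\{U_{ijk}:\{i,j,k\}\text{ a basis}\}$ restricted to the non-loop coordinates meets every chamber of the braid arrangement in a codimension-2 subcomplex.) A matroid is simple if it has no loops and no parallel elements. *)

theory Defs
  imports Main
begin

definition matroid_bases :: "'a set \<Rightarrow> 'a set set \<Rightarrow> bool" where
  "matroid_bases E \<B> \<longleftrightarrow> finite E \<and> \<B> \<noteq> {} \<and> (\<forall>B\<in>\<B>. B \<subseteq> E) \<and>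
     (\<forall>B1\<in>\<B>. \<forall>B2\<in>\<B>. \<forall>x\<in>B1 - B2. \<exists>y\<in>B2 - B1. insert y (B1 - {x}) \<in> \<B>)"

definition matroid_rank_eq :: "'a set set \<Rightarrow> nat \<Rightarrow> bool" where
  "matroid_rank_eq \<B> r \<longleftrightarrow> (\<forall>B\<in>\<B>. card B = r)"

definition indep :: "'a set set \<Rightarrow> 'a set \<Rightarrow> bool" where
  "indep \<B> I \<longleftrightarrow> (\<exists>B\<in>\<B>. I \<subseteq> B)"

definition is_loop :: "'a set \<Rightarrow> 'a set set \<Rightarrow> 'a \<Rightarrow> bool" where
  "is_loop E \<B> e \<longleftrightarrow> e \<in> E \<and> \<not> indep \<B> {e}"

definition parallel :: "'a set \<Rightarrow> 'a set set \<Rightarrow> 'a \<Rightarrow> 'a \<Rightarrow> bool" where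
  "parallel E \<B> e f \<longleftrightarrow> e \<in> E \<and> f \<in> E \<and> e \<noteq> f \<and> \<not> is_loop E \<B> e \<and> \<not> is_loop E \<B> f
      \<and> \<not> indep \<B> {e, f}"

definition nonloops :: "'a set \<Rightarrow> 'a set set \<Rightarrow> 'a set" where
  "nonloops E \<B> = {e \<in> E. \<not> is_loop E \<B> e}"

definition DJS :: "'a set \<Rightarrow> 'a set set \<Rightarrow> bool" where
  "DJS E \<B> \<longleftrightarrow> (\<forall>ws. distinct ws \<and> set ws = nonloops E \<B> \<longrightarrow>
      (\<exists>j. j + 2 < length ws \<and> {ws ! j, ws ! (j + 1), ws ! (j + 2)} \<in> \<B>))"

end

theory Submission
  imports Defs
begin

lemma exch3:
  assumes M: "matroid_bases E Bs" and R: "matroid_rank_eq Bs 3"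
    and ab: "a \<noteq> b" and I: "indep Bs {a, b}" and S: "S \<in> Bs"
  shows "\<exists>y\<in>S. {a, b, y} \<in> Bs"
proof -
  obtain B2 where B2: "B2 \<in> Bs" "{a, b} \<subseteq> B2" using I unfolding indep_def by blast
  have c3: "card B2 = 3" using R B2 unfolding matroid_rank_eq_def by blast
  have fin: "finite B2" using c3 card.infinite by fastforce
  have "card (B2 - {a, b}) = 1" using c3 B2(2) ab fin by (simp add: card_Diff_subset)
  then obtain e where e: "B2 - {a, b} = {e}" using card_1_singletonE by blast
  have B2e: "B2 = {a, b, e}" using e B2(2) by blast
  have ne: "e \<noteq> a" "e \<noteq> b" using e by auto
  show ?thesis
  proof (cases "e \<in> S")
    case True then show ?thesis using B2 B2e by blast
  next
    case False
    then have "e \<in> B2 - S" using B2e by blast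
    then obtain y where y: "y \<in> S - B2" "insert y (B2 - {e}) \<in> Bs"
      using M B2(1) S unfolding matroid_bases_def by blast
    have "B2 - {e} = {a, b}" using B2e ne by blast
    then have "{a, b, y} \<in> Bs" using y(2) by (simp add: insert_commute)
    then show ?thesis using y(1) by blast
  qed
qed

lemma trans3:
  assumes M: "matroid_bases E Bs" and R: "matroid_rank_eq Bs 3"
    and ab: "a \<noteq> b" and Iab: "indep Bs {a, b}"
    and cd: "c \<noteq> d" and Icd: "indep Bs {c, d}"
    and nc: "{a, b, c} \<notin> Bs" and nd: "{a, b, d} \<notin> Bs" and nx: "{c, d, x} \<notin> Bs"
  shows "{a, b, x} \<notin> Bs"
proof
  assume X: "{a, b, x} \<in> Bs"
  obtain y where y: "y \<in> {a, b, x}" "{c, d, y} \<in> Bs" using exch3[OF M R cd Icd X] by blast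
  have two: "{a, b} \<notin> Bs" using R ab unfolding matroid_rank_eq_def by force
  show False
  proof -
    have "y = a \<or> y = b" using y nx by blast
    then obtain z where z: "{c, d, z} \<in> Bs" "z \<in> {a, b}" using y by blast
    obtain w where w: "w \<in> {c, d, z}" "{a, b, w} \<in> Bs" using exch3[OF M R ab Iab z(1)] by blast
    have "w = z" using w nc nd by blast
    then have "{a, b, w} = {a, b}" using z(2) by blast
    then show False using w two by simp
  qed
qed

theorem proposition6p6:
  fixes n :: nat and \<B> :: "nat set set"
  assumes "matroid_bases {1..n} \<B>"
    and "matroid_rank_eq \<B> 3"
    and "\<not> (\<exists>e f. parallel {1..n} \<B> e f)"
  shows "DJS {1..n} \<B>"
  unfolding DJS_def
proof (intro allI impI)
  fix ws :: "nat list"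
  assume ws: "distinct ws \<and> set ws = nonloops {1..n} \<B>"
  show "\<exists>j. j + 2 < length ws \<and> {ws ! j, ws ! (j + 1), ws ! (j + 2)} \<in> \<B>"
  proof (rule ccontr)
    assume H: "\<not> ?thesis"
    have indep2: "indep \<B> {ws ! i, ws ! j}" if "i < length ws" "j < length ws" "i \<noteq> j" for i j
    proof -
      have "ws ! i \<in> nonloops {1..n} \<B>" "ws ! j \<in> nonloops {1..n} \<B>"
        using ws that nth_mem by blast+
      moreover have "ws ! i \<noteq> ws ! j" using ws that nth_eq_iff_index_eq by blast
      ultimately show ?thesis using assms(3) unfolding parallel_def nonloops_def by blast
    qed
    obtain S where S: "S \<in> \<B>" using assms(1) unfolding matroid_bases_def by blast
    have cS: "card S = 3" using S assms(2) unfolding matroid_rank_eq_def by blast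
    have Ssub: "S \<subseteq> set ws"
    proof
      fix e assume e: "e \<in> S"
      have "e \<in> {1..n}" using e S assms(1) unfolding matroid_bases_def by blast
      moreover have "indep \<B> {e}" using e S unfolding indep_def by blast
      ultimately show "e \<in> set ws" using ws unfolding nonloops_def is_loop_def by blast
    qed
    have "3 \<le> card (set ws)" using cS card_mono[OF finite_set Ssub] by simp
    then have len: "3 \<le> length ws" using card_length[of ws] by linarith
    have l01: "0 < length ws" "1 < length ws" using len by auto
    have ab: "ws ! 0 \<noteq> ws ! 1" using ws nth_eq_iff_index_eq[of ws 0 1] l01 by auto
    have Iab: "indep \<B> {ws ! 0, ws ! 1}" using indep2[OF l01] by simp
    have two: "\<And>z. z \<in> {ws ! 0, ws ! 1} \<Longrightarrow> {ws ! 0, ws ! 1, z} \<notin> \<B>"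
    proof -
      fix z assume "z \<in> {ws ! 0, ws ! 1}"
      then have "{ws ! 0, ws ! 1, z} = {ws ! 0, ws ! 1}" by blast
      then show "{ws ! 0, ws ! 1, z} \<notin> \<B>" using assms(2) ab unfolding matroid_rank_eq_def
        by (metis card_2_iff numeral_eq_iff semiring_norm(86) numeral_2_eq_2 numeral_3_eq_3 n_not_Suc_n)
    qed
    have P: "k + 1 < length ws \<Longrightarrow> {ws ! 0, ws ! 1, ws ! k} \<notin> \<B> \<and> {ws ! 0, ws ! 1, ws ! (k+1)} \<notin> \<B>" for k
    proof (induction k)
      case 0
      have "{ws ! 0, ws ! 1, ws ! 0} \<notin> \<B>" "{ws ! 0, ws ! 1, ws ! 1} \<notin> \<B>" using two by blast+
      then show ?case by simp
    next
      case (Suc k)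
      then have IH: "{ws ! 0, ws ! 1, ws ! k} \<notin> \<B>" "{ws ! 0, ws ! 1, ws ! (k+1)} \<notin> \<B>" by simp_all
      have cd: "ws ! k \<noteq> ws ! (k+1)" using ws nth_eq_iff_index_eq[of ws k "k+1"] Suc.prems by auto
      have Icd: "indep \<B> {ws ! k, ws ! (k+1)}" using indep2 Suc.prems by simp
      have nx: "{ws ! k, ws ! (k+1), ws ! (k+2)} \<notin> \<B>" proof -
        have "\<not> (k + 2 < length ws \<and> {ws ! k, ws ! (k + 1), ws ! (k + 2)} \<in> \<B>)" using H by blast
        moreover have "k + 2 < length ws" using Suc.prems by simp
        ultimately show ?thesis by blast
      qed
      have "{ws ! 0, ws ! 1, ws ! (k+2)} \<notin> \<B>"
        using trans3[OF assms(1) assms(2) ab Iab cd Icd IH nx] .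
      then show ?case using IH by simp
    qed
    obtain y where y: "y \<in> S" "{ws ! 0, ws ! 1, y} \<in> \<B>" using exch3[OF assms(1) assms(2) ab Iab S] by blast
    obtain i where i: "i < length ws" "y = ws ! i" proof -
      have "y \<in> set ws" using y(1) Ssub by blast
      then show ?thesis using that by (auto simp: in_set_conv_nth)
    qed
    show False
    proof (cases i)
      case 0 then show ?thesis using two[of "ws ! 0"] y i by blast
    next
      case (Suc k)
      then have "{ws ! 0, ws ! 1, ws ! (k+1)} \<notin> \<B>" using P[of k] i by simp
      then show ?thesis using y i Suc by simp
    qed
  qed
qed

end
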